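(* Let $H(s)=\boldsymbol b^T(s\boldsymbol I-\boldsymbol A)^{-1}\boldsymbol b$ be a minimal SSS system of order $n$ with $\boldsymbol A$ symmetric negative definite, and let $r<n$. Suppose $\boldsymbol s^*$ is a fixed point of the IRKA map $\lambda$, and let $H_r$ be the associated reduced model (which is SSS, obtained as $\boldsymbol A_r=\boldsymbol Q_r^T\boldsymbol A\boldsymbol Q_r$, $\boldsymbol b_r=\boldsymbol c_r=\boldsymbol Q_r^T\boldsymbol b$ with $\boldsymbol Q_r$ an orthonormal basis of the range of $\boldsymbol V_r$), with distinct poles $\tilde\lambda_1,\dots,\tilde\lambda_r$ (so $s_i^*=-\tilde\lambda_i$ and $H_r$ is a Hermite interpolant of $H$ at $-\tilde\lambda_1,\dots,-\tilde\lambda_r$). Then the diagonal matrix $\boldsymbol E=\mathrm{diag}\big(H''(-\tilde\lambda_1)-H_r''(-\tilde\lambda_1),\dots,H''(-\tilde\lambda_r)-H_r''(-\tilde\lambda_r)\big)$ is positive definite.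
   Context: SSS: $\boldsymbol A=\boldsymbol A^T$, $\boldsymbol c=\boldsymbol b$. IRKA map: for distinct $s_1,\dots,s_r$ not eigenvalues of $\boldsymbol A$, set $\boldsymbol V_r=[(s_1\boldsymbol I-\boldsymbol A)^{-1}\boldsymbol b,\dots,(s_r\boldsymbol I-\boldsymbol A)^{-1}\boldsymbol b]$, $\boldsymbol W_r=\boldsymbol V_r$ (SSS case), $\boldsymbol A_r=(\boldsymbol W_r^T\boldsymbol V_r)^{-1}\boldsymbol W_r^T\boldsymbol A\boldsymbol V_r$, and $\lambda(\boldsymbol s)=-(\text{eigenvalues of }\boldsymbol A_r)$; a fixed point satisfies $\lambda(\boldsymbol s)=\boldsymbol s$. By construction, the reduced model satisfies $H(s_i)=H_r(s_i)$ and $H'(s_i)=H_r'(s_i)$. *)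

theory Defs
  imports "HOL-Analysis.Analysis"
begin

definition is_eigenvalue :: "real^'n^'n \<Rightarrow> real \<Rightarrow> bool" where
  "is_eigenvalue M mu \<longleftrightarrow> (\<exists>v. v \<noteq> 0 \<and> M *v v = mu *\<^sub>R v)"

definition transfer :: "real^'n^'n \<Rightarrow> real^'n \<Rightarrow> real^'n \<Rightarrow> real \<Rightarrow> real" where
  "transfer A b c s = c \<bullet> (matrix_inv (s *\<^sub>R mat 1 - A) *v b)"

definition krylov :: "real^'n^'n \<Rightarrow> real^'n \<Rightarrow> nat \<Rightarrow> real^'n" where
  "krylov A b k = (((*v) A) ^^ k) b"

text \<open>Minimality of the SSS system (A, b, c = b): controllable and observable,
  i.e. span{b, Ab, ..., A^(n-1) b} = R^n and span{c, A^T c, ...} = R^n.\<close>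
definition minimal_sss :: "real^'n^'n \<Rightarrow> real^'n \<Rightarrow> bool" where
  "minimal_sss A b \<longleftrightarrow>
     span {krylov A b k | k. k < CARD('n)} = UNIV \<and>
     span {krylov (transpose A) b k | k. k < CARD('n)} = UNIV"

definition irka_V :: "real^'n^'n \<Rightarrow> real^'n \<Rightarrow> real^'r \<Rightarrow> real^'r^'n" where
  "irka_V A b s = (\<chi> i j. (matrix_inv (s$j *\<^sub>R mat 1 - A) *v b) $ i)"

definition irka_Ar :: "real^'n^'n \<Rightarrow> real^'n \<Rightarrow> real^'r \<Rightarrow> real^'r^'r" where
  "irka_Ar A b s = (let V = irka_V A b s in
      matrix_inv (transpose V ** V) ** (transpose V ** A ** V))"

definition pos_def :: "real^'r^'r \<Rightarrow> bool" where
  "pos_def E \<longleftrightarrow> (\<forall>x. x \<noteq> 0 \<longrightarrow> x \<bullet> (E *v x) > 0)"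

definition diag_mat :: "real^'r \<Rightarrow> real^'r^'r" where
  "diag_mat d = (\<chi> i j. if i = j then d$i else 0)"

end

theory Submission
  imports Defs "HOL-Computational_Algebra.Polynomial"
begin


lemma inner_mv: fixes M :: "real^'m^'k"
  shows "x \<bullet> (M *v y) = (transpose M *v x) \<bullet> y"
  by (simp add: dot_lmul_matrix)

lemma shift_mv: fixes M :: "real^'m^'m"
  shows "(s *\<^sub>R mat 1 - M) *v z = s *\<^sub>R z - M *v z"
  by (metis matrix_vector_mult_diff_rdistrib scaleR_matrix_vector_assoc matrix_vector_mul_lid)

lemma smat: fixes v :: "real^'m"
  shows "(s *\<^sub>R mat 1) *v v = s *\<^sub>R v"
  by (metis scaleR_matrix_vector_assoc matrix_vector_mul_lid)

lemma transpose_diff: "transpose (A - B) = transpose A - (transpose B :: real^_^_)"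
  by (simp add: transpose_def vec_eq_iff)

lemma inv_right: fixes M :: "real^'m^'m"
  assumes "\<forall>z. M *v z = 0 \<longrightarrow> z = 0"
  shows "M *v (matrix_inv M *v y) = y"
proof -
  have "invertible M" using assms matrix_left_invertible_ker invertible_left_inverse by blast
  then have "M ** matrix_inv M = mat 1 \<and> matrix_inv M ** M = mat 1"
    unfolding invertible_def matrix_inv_def by (rule someI_ex)
  then show ?thesis by (simp add: matrix_vector_mul_assoc)
qed

definition res :: "real^'m^'m \<Rightarrow> real \<Rightarrow> real^'m \<Rightarrow> real^'m" where
  "res M s y = matrix_inv (s *\<^sub>R mat 1 - M) *v y"

locale negsym =
  fixes M :: "real^'m^'m"
  assumes sym: "transpose M = M"
    and neg: "\<forall>x. x \<noteq> 0 \<longrightarrow> x \<bullet> (M *v x) < 0"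
begin

lemma quad_ge: "0 < s \<Longrightarrow> z \<bullet> ((s *\<^sub>R mat 1 - M) *v z) \<ge> s * (z \<bullet> z)"
  using neg[rule_format, of z]
  by (cases "z = 0") (auto simp: shift_mv inner_diff_right)

lemma shift_inj: "0 < s \<Longrightarrow> (s *\<^sub>R mat 1 - M) *v z = 0 \<Longrightarrow> z = 0"
  using quad_ge[of s z] by (metis inner_zero_right inner_gt_zero_iff mult_pos_pos not_le)

lemma res_eq: "0 < s \<Longrightarrow> (s *\<^sub>R mat 1 - M) *v res M s y = y"
  unfolding res_def by (rule inv_right) (use shift_inj in blast)

lemma res_unique: "0 < s \<Longrightarrow> (s *\<^sub>R mat 1 - M) *v z = y \<Longrightarrow> res M s y = z"
proof -
  assume s: "0 < s" and z: "(s *\<^sub>R mat 1 - M) *v z = y"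
  have "(s *\<^sub>R mat 1 - M) *v (res M s y - z) = 0"
    using res_eq[OF s] z by (simp add: matrix_vector_mult_diff_distrib)
  then have "res M s y - z = 0" using shift_inj[OF s] by blast
  then show ?thesis by simp
qed

lemma shift_sym: "transpose (s *\<^sub>R mat 1 - M) = s *\<^sub>R mat 1 - M"
  using sym by (simp add: transpose_scalar transpose_diff)

lemma shift_swap: "x \<bullet> ((s *\<^sub>R mat 1 - M) *v y) = ((s *\<^sub>R mat 1 - M) *v x) \<bullet> y"
  by (metis inner_mv shift_sym)

lemma res_norm: "0 < s \<Longrightarrow> s * norm (res M s y) \<le> norm y"
proof -
  assume s: "0 < s"
  let ?z = "res M s y"
  have "s * (?z \<bullet> ?z) \<le> ?z \<bullet> y" using quad_ge[OF s, of ?z] res_eq[OF s] by simp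
  also have "\<dots> \<le> norm ?z * norm y" by (rule norm_cauchy_schwarz)
  finally have "s * (norm ?z * norm ?z) \<le> norm ?z * norm y"
    by (simp add: dot_square_norm power2_eq_square)
  then show ?thesis
    by (cases "norm ?z = 0") (auto simp: mult.assoc)
qed

lemma res_diff: "0 < s \<Longrightarrow> 0 < t \<Longrightarrow> res M s y - res M t y = (t - s) *\<^sub>R res M s (res M t y)"
proof -
  assume s: "0 < s" and t: "0 < t"
  have "res M s y = res M t y + (t - s) *\<^sub>R res M s (res M t y)"
  proof (rule res_unique[OF s])
    let ?u = "res M t y" and ?w = "res M s (res M t y)"
    have a: "s *\<^sub>R ?u - M *v ?u = (t *\<^sub>R ?u - M *v ?u) + (s - t) *\<^sub>R ?u"
      by (simp add: algebra_simps)
    have b: "t *\<^sub>R ?u - M *v ?u = y" using res_eq[OF t, of y] by (simp add: shift_mv)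
    have c: "s *\<^sub>R ?w - M *v ?w = ?u" using res_eq[OF s, of ?u] by (simp add: shift_mv)
    have "(s *\<^sub>R mat 1 - M) *v (?u + (t - s) *\<^sub>R ?w) = (s *\<^sub>R ?u - M *v ?u) + (t - s) *\<^sub>R (s *\<^sub>R ?w - M *v ?w)"
      by (simp add: shift_mv matrix_vector_right_distrib matrix_vector_mult_scaleR scaleR_diff_right)
    also have "\<dots> = y" using a b c by (simp add: algebra_simps)
    finally show "(s *\<^sub>R mat 1 - M) *v (?u + (t - s) *\<^sub>R ?w) = y" .
  qed
  then show ?thesis by simp
qed

lemma res_swap: "0 < s \<Longrightarrow> y \<bullet> res M s w = res M s y \<bullet> w"
  by (metis res_eq shift_swap)

lemma res_cont: assumes t: "0 < t" shows "((\<lambda>s. res M s y) \<longlongrightarrow> res M t y) (at t)"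
proof -
  define K where "K = 2 * norm (res M t y) / t"
  have ev: "eventually (\<lambda>s. t/2 < s) (at t)"
    using t by (intro order_tendstoD(1)[OF tendsto_ident_at]) simp
  have "eventually (\<lambda>s. norm (res M s y - res M t y) \<le> \<bar>t - s\<bar> * K) (at t)"
    using ev
  proof eventually_elim
    case (elim s)
    then have s: "0 < s" using t by simp
    have e: "norm (res M s y - res M t y) = \<bar>t - s\<bar> * norm (res M s (res M t y))"
      using res_diff[OF s t] by simp
    have f: "s * norm (res M s (res M t y)) \<le> norm (res M t y)"
      using res_norm[OF s] .
    have g: "norm (res M s (res M t y)) \<le> K"
    proof -
      have "(t/2) * norm (res M s (res M t y)) \<le> s * norm (res M s (res M t y))"
        using elim by (intro mult_right_mono) auto
      then have "(t/2) * norm (res M s (res M t y)) \<le> norm (res M t y)" using f by linarith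
      then show ?thesis using t unfolding K_def by (simp add: field_simps)
    qed
    show ?case unfolding e by (rule mult_left_mono[OF g]) simp
  qed
  moreover have "((\<lambda>s. \<bar>t - s\<bar> * K) \<longlongrightarrow> 0) (at t)"
  proof -
    have "((\<lambda>s. \<bar>t - s\<bar> * K) \<longlongrightarrow> \<bar>t - t\<bar> * K) (at t)"
      by (intro tendsto_intros)
    then show ?thesis by simp
  qed
  ultimately show ?thesis by (subst Lim_null) (rule Lim_null_comparison)
qed

lemma ev_pos_ne: "0 < (t::real) \<Longrightarrow> eventually (\<lambda>s. 0 < s \<and> s \<noteq> t) (at t)"
proof -
  assume t: "0 < t"
  have "eventually (\<lambda>s. 0 < s) (at t)"
    using order_tendstoD(1)[OF tendsto_ident_at[of t UNIV] t] by simp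
  moreover have "eventually (\<lambda>s. s \<noteq> t) (at t)" by (simp add: eventually_at_filter)
  ultimately show ?thesis by eventually_elim auto
qed

lemma d1: assumes t: "0 < t"
  shows "((\<lambda>s. y \<bullet> res M s y) has_field_derivative -(res M t y \<bullet> res M t y)) (at t)"
  unfolding has_field_derivative_iff
proof -
  have lim: "((\<lambda>s. - (res M s y \<bullet> res M t y)) \<longlongrightarrow> -(res M t y \<bullet> res M t y)) (at t)"
    by (intro tendsto_intros res_cont[OF t])
  show "((\<lambda>s. (y \<bullet> res M s y - y \<bullet> res M t y) / (s - t)) \<longlongrightarrow> -(res M t y \<bullet> res M t y)) (at t)"
  proof (rule Lim_transform_eventually[OF lim])
    show "eventually (\<lambda>s. - (res M s y \<bullet> res M t y) = (y \<bullet> res M s y - y \<bullet> res M t y) / (s - t)) (at t)"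
      using ev_pos_ne[OF t]
    proof eventually_elim
      case (elim s)
      then have s: "0 < s" and ne: "s - t \<noteq> 0" by auto
      have "y \<bullet> res M s y - y \<bullet> res M t y = y \<bullet> (res M s y - res M t y)" by (simp add: inner_diff_right)
      also have "\<dots> = (t - s) * (y \<bullet> res M s (res M t y))" using res_diff[OF s t] by simp
      also have "\<dots> = (t - s) * (res M s y \<bullet> res M t y)" using res_swap[OF s] by simp
      finally show ?case using ne by (simp add: field_simps)
    qed
  qed
qed

lemma d2: assumes t: "0 < t"
  shows "((\<lambda>s. res M s y \<bullet> res M s y) has_field_derivative -(2 * (res M t y \<bullet> res M t (res M t y)))) (at t)"
  unfolding has_field_derivative_iff
proof -
  have lim: "((\<lambda>s. - (res M s (res M t y) \<bullet> (res M s y + res M t y))) \<longlongrightarrow>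
      - (res M t (res M t y) \<bullet> (res M t y + res M t y))) (at t)"
    by (intro tendsto_intros res_cont[OF t])
  have eq: "- (res M t (res M t y) \<bullet> (res M t y + res M t y)) = -(2 * (res M t y \<bullet> res M t (res M t y)))"
    by (subst inner_add_right) (simp add: inner_commute)
  show "((\<lambda>s. (res M s y \<bullet> res M s y - res M t y \<bullet> res M t y) / (s - t)) \<longlongrightarrow> -(2 * (res M t y \<bullet> res M t (res M t y)))) (at t)"
  proof (rule Lim_transform_eventually[OF lim[unfolded eq]])
    show "eventually (\<lambda>s. - (res M s (res M t y) \<bullet> (res M s y + res M t y)) = (res M s y \<bullet> res M s y - res M t y \<bullet> res M t y) / (s - t)) (at t)"
      using ev_pos_ne[OF t]
    proof eventually_elim
      case (elim s)
      then have s: "0 < s" and ne: "s - t \<noteq> 0" by auto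
      have "res M s y \<bullet> res M s y - res M t y \<bullet> res M t y = (res M s y - res M t y) \<bullet> (res M s y + res M t y)"
        by (simp add: inner_diff_left inner_add_right inner_diff_right inner_commute)
      also have "\<dots> = (t - s) * (res M s (res M t y) \<bullet> (res M s y + res M t y))" using res_diff[OF s t] by simp
      finally show ?case using ne by (simp add: field_simps)
    qed
  qed
qed

lemma dd: assumes t: "0 < t"
  shows "deriv (deriv (\<lambda>s. y \<bullet> res M s y)) t = 2 * (res M t y \<bullet> res M t (res M t y))"
proof -
  have "((\<lambda>s. - (res M s y \<bullet> res M s y)) has_field_derivative 2 * (res M t y \<bullet> res M t (res M t y))) (at t)"
    using DERIV_minus[OF d2[OF t]] by simp
  then have "(deriv (\<lambda>s. y \<bullet> res M s y) has_field_derivative 2 * (res M t y \<bullet> res M t (res M t y))) (at t)"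
    by (rule has_field_derivative_transform_within_open[where S="{0<..}"])
       (use t DERIV_imp_deriv[OF d1] in auto)
  then show ?thesis by (rule DERIV_imp_deriv)
qed

end


definition kop :: "real^'n^'n \<Rightarrow> real poly \<Rightarrow> real^'n \<Rightarrow> real^'n" where
  "kop A p v = (\<Sum>k\<le>degree p. coeff p k *\<^sub>R (((*v) A) ^^ k) v)"

lemma kop_N: "degree p \<le> N \<Longrightarrow> kop A p v = (\<Sum>k\<le>N. coeff p k *\<^sub>R (((*v) A) ^^ k) v)"
  unfolding kop_def by (rule sum.mono_neutral_left) (auto simp: coeff_eq_0)

lemma kop_0[simp]: "kop A 0 v = 0"
  by (simp add: kop_def)

lemma mv_sum: "A *v (\<Sum>k\<in>S. f k) = (\<Sum>k\<in>S. A *v f k)" for A :: "real^'n^'m"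
  by (induct S rule: infinite_finite_induct) (auto simp: matrix_vector_right_distrib)

lemma kop_pCons: "kop A (pCons a p) v = a *\<^sub>R v + A *v kop A p v"
proof -
  have "kop A (pCons a p) v = (\<Sum>k\<le>Suc (degree p). coeff (pCons a p) k *\<^sub>R (((*v) A) ^^ k) v)"
    by (rule kop_N) (rule degree_pCons_le)
  also have "\<dots> = a *\<^sub>R v + (\<Sum>k\<le>degree p. coeff p k *\<^sub>R (((*v) A) ^^ Suc k) v)"
    by (subst sum.atMost_Suc_shift) simp
  also have "(\<Sum>k\<le>degree p. coeff p k *\<^sub>R (((*v) A) ^^ Suc k) v) = A *v kop A p v"
    by (simp add: kop_def mv_sum matrix_vector_mult_scaleR)
  finally show ?thesis .
qed

lemma kop_add_v: "kop A p (v + w) = kop A p v + kop A p w"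
  by (induct p) (simp_all add: kop_pCons algebra_simps)

lemma kop_scale_v: "kop A p (c *\<^sub>R v) = c *\<^sub>R kop A p v"
  by (induct p) (simp_all add: kop_pCons algebra_simps)

lemma kop_zero_v[simp]: "kop A p 0 = 0"
  using kop_scale_v[of A p 0 0] by simp

lemma kop_diff_v: "kop A p (v - w) = kop A p v - kop A p w"
  using kop_add_v[of A p "v - w" w] by simp

lemma kop_sum_v: "kop A p (\<Sum>j\<in>S. f j) = (\<Sum>j\<in>S. kop A p (f j))"
  by (induct S rule: infinite_finite_induct) (auto simp: kop_add_v)

lemma kop_add: "kop A (p + q) v = kop A p v + kop A q v"
proof -
  let ?N = "degree p + degree q"
  have "kop A (p + q) v = (\<Sum>k\<le>?N. coeff (p + q) k *\<^sub>R (((*v) A) ^^ k) v)"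
    by (rule kop_N) (meson degree_add_le le_add1 le_add2)
  also have "\<dots> = (\<Sum>k\<le>?N. coeff p k *\<^sub>R (((*v) A) ^^ k) v) + (\<Sum>k\<le>?N. coeff q k *\<^sub>R (((*v) A) ^^ k) v)"
    by (simp add: scaleR_add_left sum.distrib)
  also have "\<dots> = kop A p v + kop A q v"
    by (subst (1 2) kop_N[symmetric]) auto
  finally show ?thesis .
qed

lemma kop_smult: "kop A (smult c p) v = c *\<^sub>R kop A p v"
proof -
  have "kop A (smult c p) v = (\<Sum>k\<le>degree p. coeff (smult c p) k *\<^sub>R (((*v) A) ^^ k) v)"
    by (rule kop_N) (rule degree_smult_le)
  then show ?thesis by (simp add: kop_def scaleR_sum_right)
qed

lemma kop_sum: "kop A (\<Sum>j\<in>S. f j) v = (\<Sum>j\<in>S. kop A (f j) v)"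
  by (induct S rule: infinite_finite_induct) (auto simp: kop_add)

lemma kop_minus: "kop A (p - q) v = kop A p v - kop A q v"
  using kop_add[of A "p - q" q v] by simp

lemma kop_mult: "kop A (p * q) v = kop A p (kop A q v)"
proof (induct p)
  case 0 then show ?case by simp
next
  case (pCons a p)
  have "kop A (pCons a p * q) v = kop A (smult a q) v + kop A (pCons 0 (p * q)) v"
    by (simp add: kop_add)
  also have "\<dots> = a *\<^sub>R kop A q v + A *v kop A p (kop A q v)"
    by (simp add: kop_smult kop_pCons pCons)
  also have "\<dots> = kop A (pCons a p) (kop A q v)" by (simp add: kop_pCons)
  finally show ?case .
qed

lemma mv_neg: "A *v (- v) = - (A *v v)" for A :: "real^'n^'m"
  by (metis matrix_vector_mult_scaleR scaleR_minus1_left)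

lemma kop_lin: "kop A [:c, -1:] v = c *\<^sub>R v - A *v v"
  by (simp add: kop_pCons mv_neg)

lemma kop_krylov: "degree p < N \<Longrightarrow> kop A p b = (\<Sum>k<N. coeff p k *\<^sub>R krylov A b k)"
proof -
  assume d: "degree p < N"
  then obtain M where N: "N = Suc M" by (cases N) auto
  have "kop A p b = (\<Sum>k\<le>M. coeff p k *\<^sub>R krylov A b k)"
    using d N by (subst kop_N[of p M]) (auto simp: krylov_def)
  then show ?thesis using N lessThan_Suc_atMost by simp
qed

lemma krylov_indep:
  assumes span: "span {krylov A b k | k. k < CARD('n)} = UNIV"
    and sum0: "(\<Sum>k<CARD('n). a k *\<^sub>R krylov A b k) = (0::real^'n)"
  shows "\<forall>k<CARD('n). a k = 0"
proof -
  let ?n = "CARD('n)"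
  let ?S = "krylov A b ` {..<?n}"
  have S: "{krylov A b k | k. k < ?n} = ?S" by auto
  have fin: "finite ?S" by simp
  have c1: "card ?S \<le> ?n" using card_image_le[of "{..<?n}" "krylov A b"] by simp
  have ind: "independent ?S"
    by (rule eucl.card_le_dim_spanning[of ?S UNIV]) (use span S c1 in auto)
  have "card ?S \<ge> ?n"
  proof -
    have "dim (UNIV :: (real^'n) set) \<le> card ?S"
      using span S by (metis dim_le_card finite_imageI finite_lessThan subset_UNIV)
    then show ?thesis by simp
  qed
  then have "card ?S = card {..<?n}" using c1 by simp
  then have inj: "inj_on (krylov A b) {..<?n}" by (rule eq_card_imp_inj_on[rotated]) simp
  define u where "u v = a (the_inv_into {..<?n} (krylov A b) v)" for v
  have uk: "u (krylov A b k) = a k" if "k < ?n" for k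
    unfolding u_def using the_inv_into_f_f[OF inj] that by simp
  have "(\<Sum>v\<in>?S. u v *\<^sub>R v) = (\<Sum>k<?n. u (krylov A b k) *\<^sub>R krylov A b k)"
    by (rule sum.reindex[OF inj, unfolded comp_def])
  also have "\<dots> = 0" using sum0 uk by simp
  finally have z: "(\<Sum>v\<in>?S. u v *\<^sub>R v) = 0" .
  show ?thesis
  proof (intro allI impI)
    fix k assume k: "k < ?n"
    show "a k = 0"
    proof (rule ccontr)
      assume "a k \<noteq> 0"
      then have "\<exists>v\<in>?S. u v \<noteq> 0" using uk[OF k] k by (metis imageI lessThan_iff)
      then have "dependent ?S" using z real_vector.dependent_finite[OF fin] by blast
      then show False using ind by simp
    qed
  qed
qed

lemma kop_zero_poly:
  assumes span: "span {krylov A b k | k. k < CARD('n)} = UNIV"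
    and d: "degree p < CARD('n)" and z: "kop A p b = (0::real^'n)"
  shows "p = 0"
proof -
  have "\<forall>k<CARD('n). coeff p k = 0"
    by (rule krylov_indep[OF span]) (use kop_krylov[OF d, of A b] z in simp)
  then show ?thesis using d by (metis coeff_eq_0 leading_coeff_0_iff)
qed



lemma V_mult: "irka_V A b s *v c = (\<Sum>j\<in>UNIV. c$j *\<^sub>R (matrix_inv (s$j *\<^sub>R mat 1 - A) *v b))"
  by (simp add: vec_eq_iff matrix_vector_mult_def irka_V_def sum_component mult.commute)

lemma diag_pos: assumes "\<forall>i. 0 < e$i" shows "pos_def (diag_mat e)"
  unfolding pos_def_def
proof (intro allI impI)
  fix x :: "real^'a" assume "x \<noteq> 0"
  then obtain k where k: "x$k \<noteq> 0" by (metis vec_eq_iff zero_index)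
  have "diag_mat e *v x = (\<chi> i. e$i * x$i)"
  proof -
    have "\<And>i. (\<Sum>j\<in>UNIV. (if i = j then e$i else 0) * x$j) = e$i * x$i"
    proof -
      fix i
      have "(\<Sum>j\<in>UNIV. (if i = j then e$i else 0) * x$j) = (\<Sum>j\<in>UNIV. if i = j then e$i * x$j else 0)"
        by (rule sum.cong) auto
      then show "(\<Sum>j\<in>UNIV. (if i = j then e$i else 0) * x$j) = e$i * x$i" by simp
    qed
    then show ?thesis by (simp add: vec_eq_iff matrix_vector_mult_def diag_mat_def)
  qed
  then have "x \<bullet> (diag_mat e *v x) = (\<Sum>i\<in>UNIV. e$i * (x$i)\<^sup>2)"
    by (simp add: inner_vec_def power2_eq_square mult.commute mult.left_commute)
  also have "\<dots> > 0"
    by (rule sum_pos2[of _ k]) (use assms k in \<open>auto intro!: mult_nonneg_nonneg less_imp_le[OF assms[rule_format]]\<close>)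
  finally show "x \<bullet> (diag_mat e *v x) > 0" .
qed

lemma degD: "degree (\<Prod>k\<in>S. [:c k, -1::real:]) \<le> card S" if "finite S"
proof -
  have "degree (\<Prod>k\<in>S. [:c k, -1::real:]) \<le> sum (degree \<circ> (\<lambda>k. [:c k, -1::real:])) S"
    by (rule degree_prod_sum_le[OF that])
  then show ?thesis by simp
qed


theorem lemma4:
  fixes A :: "real^'n^'n" and b :: "real^'n" and s :: "real^'r"
    and Q :: "real^'r^'n"
  assumes symA: "transpose A = A"
    and negdef: "\<forall>x. x \<noteq> 0 \<longrightarrow> x \<bullet> (A *v x) < 0"
    and minimal: "minimal_sss A b"
    and r_lt_n: "CARD('r) < CARD('n)"
    and distinct_s: "inj (\<lambda>i. s$i)"
    and not_eig: "\<forall>i. \<not> is_eigenvalue A (s$i)"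
    and fixed_point: "{mu. is_eigenvalue (irka_Ar A b s) mu} = {- s$i | i. True}"
    and Q_orth: "transpose Q ** Q = mat 1"
    and Q_range: "range (\<lambda>x. Q *v x) = range (\<lambda>x. irka_V A b s *v x)"
  shows "pos_def (diag_mat (\<chi> i.
            deriv (deriv (transfer A b b)) (s$i)
          - deriv (deriv (transfer (transpose Q ** A ** Q) (transpose Q *v b) (transpose Q *v b))) (s$i)))"
proof -
  interpret nA: negsym A using symA negdef by unfold_locales
  define V where "V = irka_V A b s"
  define RR where "RR j = res A (s$j) b" for j
  define L where "L j = [:s$j, -1::real:]" for j
  define D where "D j = (\<Prod>k\<in>UNIV - {j}. L k)" for j
  define DF where "DF = (\<Prod>k\<in>UNIV. L k)"
  have span: "span {krylov A b k | k. k < CARD('n)} = UNIV"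
    using minimal unfolding minimal_sss_def by blast
  have shiftinj: "(s$j *\<^sub>R mat 1 - A) *v z = 0 \<Longrightarrow> z = 0" for j z
  proof -
    assume "(s$j *\<^sub>R mat 1 - A) *v z = 0"
    then have "A *v z = s$j *\<^sub>R z" by (simp add: shift_mv)
    then show "z = 0" using not_eig unfolding is_eigenvalue_def by blast
  qed
  have RReq: "(s$j *\<^sub>R mat 1 - A) *v RR j = b" for j
    unfolding RR_def res_def by (rule inv_right) (use shiftinj in blast)
  have Vc: "V *v c = (\<Sum>j\<in>UNIV. c$j *\<^sub>R RR j)" for c
    unfolding V_def RR_def res_def by (rule V_mult)
  have kopL: "kop A (L j) v = (s$j *\<^sub>R mat 1 - A) *v v" for j v
    unfolding L_def by (simp add: kop_lin shift_mv)
  have kopLR: "kop A (L j) (RR j) = b" for j using kopL RReq by simp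
  have DF_split: "DF = L j * D j" for j
    unfolding DF_def D_def by (rule prod.remove) auto
  have degD: "degree (D j) \<le> CARD('r) - 1" for j
  proof -
    have "degree (D j) \<le> card (UNIV - {j} :: 'r set)" unfolding D_def L_def by (rule degD) simp
    then show ?thesis by (simp add: card_Diff_subset)
  qed
  have degL: "degree (L j) = 1" for j unfolding L_def by simp
  have polyD: "poly (D j) x = (\<Prod>k\<in>UNIV - {j}. s$k - x)" for j x
    unfolding D_def L_def by (simp add: poly_prod)
  have polyD0: "k \<noteq> j \<Longrightarrow> poly (D j) (s$k) = 0" for j k
    unfolding polyD by (rule prod_zero) auto
  have polyDne: "poly (D j) (s$j) \<noteq> 0" for j
    unfolding polyD using distinct_s by (auto simp: inj_eq)
  have kopDR: "kop A DF (RR j) = kop A (D j) b" for j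
    using kop_mult[of A "D j" "L j" "RR j"] kopLR DF_split[of j] by (simp add: mult.commute)
  have Vinj: "V *v c = 0 \<Longrightarrow> c = 0" for c
  proof -
    assume Vc0: "V *v c = 0"
    define P where "P = (\<Sum>j\<in>UNIV. smult (c$j) (D j))"
    have "kop A P b = (\<Sum>j\<in>UNIV. c$j *\<^sub>R kop A DF (RR j))"
      unfolding P_def by (simp add: kop_sum kop_smult kopDR)
    also have "\<dots> = kop A DF (V *v c)"
      by (simp add: Vc kop_sum_v kop_scale_v)
    finally have kP: "kop A P b = 0" using Vc0 by simp
    have "degree P \<le> CARD('r) - 1"
      unfolding P_def by (rule degree_sum_le) (use degD in \<open>auto intro: order.trans[OF degree_smult_le]\<close>)
    then have "degree P < CARD('n)" using r_lt_n by linarith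
    then have P0: "P = 0" by (rule kop_zero_poly[OF span _ kP])
    show "c = 0"
    proof (subst vec_eq_iff, intro allI)
      fix k
      have "poly P (s$k) = (\<Sum>j\<in>UNIV. c$j * poly (D j) (s$k))"
        unfolding P_def by (simp add: poly_sum)
      also have "\<dots> = c$k * poly (D k) (s$k) + (\<Sum>j\<in>UNIV - {k}. c$j * poly (D j) (s$k))"
        by (rule sum.remove) auto
      also have "(\<Sum>j\<in>UNIV - {k}. c$j * poly (D j) (s$k)) = 0"
        by (rule sum.neutral) (auto simp: polyD0)
      finally show "c$k = 0$k" using P0 polyDne[of k] by simp
    qed
  qed
  define G where "G = transpose V ** V"
  have quadV: "x \<bullet> (G *v x) = (V *v x) \<bullet> (V *v x)" for x
    unfolding G_def by (simp add: matrix_vector_mul_assoc[symmetric] dot_lmul_matrix inner_commute[of x])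
  have Ginj: "\<forall>x. G *v x = 0 \<longrightarrow> x = 0"
    using quadV Vinj by (metis inner_eq_zero_iff inner_zero_right)
  have spos: "0 < s$i" for i
  proof -
    have "-s$i \<in> {mu. is_eigenvalue (irka_Ar A b s) mu}" using fixed_point by auto
    then obtain v where v0: "v \<noteq> 0" and ev: "irka_Ar A b s *v v = (-s$i) *\<^sub>R v"
      unfolding is_eigenvalue_def by auto
    define W where "W = transpose V ** A ** V"
    have "irka_Ar A b s = matrix_inv G ** W"
      unfolding irka_Ar_def G_def W_def V_def Let_def by simp
    then have "G *v (irka_Ar A b s *v v) = W *v v"
      using inv_right[OF Ginj] by (simp add: matrix_vector_mul_assoc[symmetric])
    then have eq: "W *v v = (-s$i) *\<^sub>R (G *v v)" using ev by (simp add: matrix_vector_mult_scaleR mv_neg)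
    have Vv: "V *v v \<noteq> 0" using Vinj v0 by blast
    have "v \<bullet> (W *v v) = (V *v v) \<bullet> (A *v (V *v v))"
      unfolding W_def by (simp add: matrix_vector_mul_assoc[symmetric] dot_lmul_matrix inner_commute[of v] inner_commute[of _ "V *v v"])
    then have neg: "v \<bullet> (W *v v) < 0" using negdef Vv by simp
    have pos: "v \<bullet> (G *v v) > 0" using quadV Vv by simp
    have "v \<bullet> (W *v v) = (-s$i) * (v \<bullet> (G *v v))" using eq by simp
    then have "0 < s$i * (v \<bullet> (G *v v))" using neg by linarith
    then show ?thesis using pos by (simp add: zero_less_mult_iff)
  qed
  define Ar where "Ar = transpose Q ** A ** Q"
  define cr where "cr = transpose Q *v b"
  have QQ: "transpose Q *v (Q *v x) = x" for x
    using Q_orth by (simp add: matrix_vector_mul_assoc)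
  have Qinj: "Q *v x = 0 \<Longrightarrow> x = 0" for x using QQ[of x] by simp
  have quadQ: "x \<bullet> (Ar *v x) = (Q *v x) \<bullet> (A *v (Q *v x))" for x
    unfolding Ar_def by (simp add: matrix_vector_mul_assoc[symmetric] dot_lmul_matrix inner_commute[of x] inner_commute[of _ "Q *v x"])
  interpret nR: negsym Ar
  proof
    show "transpose Ar = Ar" unfolding Ar_def using symA by (simp add: matrix_transpose_mul matrix_mul_assoc)
    show "\<forall>x. x \<noteq> 0 \<longrightarrow> x \<bullet> (Ar *v x) < 0" using quadQ negdef Qinj by metis
  qed
  have trA: "transfer A b b = (\<lambda>t. b \<bullet> res A t b)" by (simp add: fun_eq_iff transfer_def res_def)
  have trR: "transfer Ar cr cr = (\<lambda>t. cr \<bullet> res Ar t cr)" by (simp add: fun_eq_iff transfer_def res_def)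
  have QT: "(Q *v a) \<bullet> c = a \<bullet> (transpose Q *v c)" for a c
    by (metis inner_mv transpose_transpose)
  have key: "0 < res A (s$i) b \<bullet> res A (s$i) (res A (s$i) b) - res Ar (s$i) cr \<bullet> res Ar (s$i) (res Ar (s$i) cr)" for i
  proof -
    define t where "t = s$i"
    have t: "0 < t" unfolding t_def by (rule spos)
    define u where "u = res A t b"
    define z where "z = res A t u"
    define y where "y = res Ar t cr"
    define w where "w = res Ar t y"
    let ?S = "t *\<^sub>R mat 1 - A"
    let ?Sr = "t *\<^sub>R mat 1 - Ar"
    have Su: "?S *v u = b" unfolding u_def by (rule nA.res_eq[OF t])
    have Sz: "?S *v z = u" unfolding z_def by (rule nA.res_eq[OF t])
    have Sw: "?Sr *v w = y" unfolding w_def by (rule nR.res_eq[OF t])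
    have SrQ: "?Sr *v x = transpose Q *v (?S *v (Q *v x))" for x
    proof -
      have a: "Ar *v x = transpose Q *v (A *v (Q *v x))" by (simp only: Ar_def matrix_vector_mul_assoc matrix_mul_assoc)
      have "transpose Q *v (?S *v (Q *v x)) = transpose Q *v (t *\<^sub>R (Q *v x) - A *v (Q *v x))"
        by (simp only: shift_mv)
      also have "\<dots> = t *\<^sub>R x - Ar *v x"
        by (simp only: matrix_vector_mult_diff_distrib matrix_vector_mult_scaleR QQ a)
      finally show ?thesis by (simp only: shift_mv)
    qed
    have uRR: "u = RR i" unfolding u_def RR_def t_def ..
    have "V *v axis i 1 = RR i"
    proof -
      have "V *v axis i 1 = (\<Sum>j\<in>UNIV. (axis i 1 :: real^'r)$j *\<^sub>R RR j)" by (rule Vc)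
      also have "\<dots> = (\<Sum>j\<in>UNIV. if j = i then RR j else 0)"
        by (rule sum.cong) (auto simp: axis_def)
      finally show ?thesis by simp
    qed
    then have "u \<in> range (\<lambda>x. Q *v x)" using Q_range uRR unfolding V_def by (metis rangeI)
    then obtain v where v: "u = Q *v v" by auto
    have "?Sr *v v = cr" unfolding cr_def using SrQ[of v] v Su by simp
    then have yv: "y = v" unfolding y_def by (rule nR.res_unique[OF t])
    have uQy: "u = Q *v y" using v yv by simp
    define d where "d = Q *v w - z"
    have p1: "(Q *v w) \<bullet> (?S *v (Q *v w)) = w \<bullet> y"
      using QT SrQ[of w] Sw by metis
    have p2: "(Q *v w) \<bullet> (?S *v z) = w \<bullet> y"
      using QT QQ Sz uQy by metis
    have p3: "z \<bullet> (?S *v (Q *v w)) = w \<bullet> y"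
      using nA.shift_swap Sz uQy QT QQ inner_commute by metis
    have p4: "z \<bullet> (?S *v z) = z \<bullet> u" using Sz by simp
    have dSd: "d \<bullet> (?S *v d) = u \<bullet> z - y \<bullet> w"
      unfolding d_def using p1 p2 p3 p4
      by (simp add: matrix_vector_mult_diff_distrib inner_diff_left inner_diff_right inner_commute)
    have dne: "d \<noteq> 0"
    proof
      assume "d = 0"
      then have "z = Q *v w" unfolding d_def by simp
      then have "z \<in> range (\<lambda>x. V *v x)" using Q_range unfolding V_def by auto
      then obtain c where zc: "z = V *v c" by auto
      define P where "P = D i - (\<Sum>j\<in>UNIV. smult (c$j) (D j * L i))"
      have k1: "kop A (D i) b = kop A (DF * L i) z"
        using kop_mult[of A DF "L i" z] kopL[of i z] Sz kopDR[of i] uRR by (simp add: t_def)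
      have k2: "kop A (D j * L i) b = kop A (DF * L i) (RR j)" for j
        using kop_mult[of A "L i" DF "RR j"] kopDR[of j] kop_mult[of A "L i" "D j" b]
        by (simp add: mult.commute)
      have "kop A P b = kop A (DF * L i) z - (\<Sum>j\<in>UNIV. c$j *\<^sub>R kop A (DF * L i) (RR j))"
        unfolding P_def by (simp add: kop_minus kop_sum kop_smult k1 k2)
      also have "\<dots> = kop A (DF * L i) (z - V *v c)"
        by (simp add: Vc kop_diff_v kop_sum_v kop_scale_v)
      finally have kP: "kop A P b = 0" using zc by simp
      have dDL: "degree (D j * L i) \<le> CARD('r)" for j
      proof -
        have "0 < CARD('r)" by simp
        then show ?thesis using degree_mult_le[of "D j" "L i"] degD[of j] degL[of i] by linarith
      qed
      have "degree P \<le> CARD('r)"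
        unfolding P_def
        by (rule degree_diff_le) (use degD[of i] dDL in \<open>auto intro!: degree_sum_le intro: order.trans[OF degree_smult_le]\<close>)
      then have "degree P < CARD('n)" using r_lt_n by linarith
      then have P0: "P = 0" by (rule kop_zero_poly[OF span _ kP])
      have "poly P (s$i) = poly (D i) (s$i)"
        unfolding P_def by (simp add: poly_sum L_def)
      then show False using P0 polyDne[of i] by simp
    qed
    have "t * (d \<bullet> d) \<le> d \<bullet> (?S *v d)" by (rule nA.quad_ge[OF t])
    moreover have "0 < t * (d \<bullet> d)" using t dne by simp
    ultimately have "0 < u \<bullet> z - y \<bullet> w" using dSd by linarith
    then show ?thesis unfolding u_def z_def y_def w_def t_def .
  qed
  show ?thesis
    unfolding Ar_def[symmetric] cr_def[symmetric] trA trR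
    by (rule diag_pos) (use key spos nA.dd nR.dd in simp)
qed
end
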